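(* For a topological space $X$ the following statements are equivalent: (a) $C(X)$ has the countable sup property; (b) $C_b(X)$ has the countable sup property; (c) $X$ satisfies CCC for cozero sets.
   Context: $C(X)$ is the vector lattice of all real-valued continuous functions on $X$ with the pointwise order, and $C_b(X)$ its sublattice of bounded functions. A vector lattice has the countable sup property if every nonempty subset possessing a supremum contains a countable subset with the same supremum. A subset $U\subseteq X$ is a cozero set if $U=\{x: f(x)\neq 0\}$ for some $f\in C(X)$; $X$ satisfies CCC for cozero sets if every collection of pairwise disjoint cozero sets is countable. *)

theory Defs
  imports "HOL-Analysis.Analysis"
begin

text \<open>Functions are represented
  extensionally (value 0 outside topspace X), so that the pointwise order of
  functions coincides with the pointwise order on X and is antisymmetric.\<close>
definition Cfun :: "'a topology \<Rightarrow> ('a \<Rightarrow> real) set" where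
  "Cfun X = {f. continuous_map X euclideanreal f \<and> (\<forall>x. x \<notin> topspace X \<longrightarrow> f x = 0)}"

definition Cbfun :: "'a topology \<Rightarrow> ('a \<Rightarrow> real) set" where
  "Cbfun X = {f \<in> Cfun X. \<exists>B. \<forall>x\<in>topspace X. \<bar>f x\<bar> \<le> B}"

definition is_sup_in :: "('a \<Rightarrow> real) set \<Rightarrow> ('a \<Rightarrow> real) set \<Rightarrow> ('a \<Rightarrow> real) \<Rightarrow> bool" where
  "is_sup_in L S s \<longleftrightarrow> s \<in> L \<and> (\<forall>f\<in>S. f \<le> s) \<and> (\<forall>u\<in>L. (\<forall>f\<in>S. f \<le> u) \<longrightarrow> s \<le> u)"

definition countable_sup_property :: "('a \<Rightarrow> real) set \<Rightarrow> bool" where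
  "countable_sup_property L \<longleftrightarrow>
     (\<forall>S s. S \<subseteq> L \<and> S \<noteq> {} \<and> is_sup_in L S s \<longrightarrow>
        (\<exists>T \<subseteq> S. countable T \<and> is_sup_in L T s))"

definition cozero_set :: "'a topology \<Rightarrow> 'a set \<Rightarrow> bool" where
  "cozero_set X U \<longleftrightarrow> (\<exists>f. continuous_map X euclideanreal f \<and> U = {x \<in> topspace X. f x \<noteq> 0})"

definition ccc_cozero :: "'a topology \<Rightarrow> bool" where
  "ccc_cozero X \<longleftrightarrow>
     (\<forall>\<U>. (\<forall>U\<in>\<U>. cozero_set X U) \<and> pairwise disjnt \<U> \<longrightarrow> countable \<U>)"

end

theory Submission
  imports Defs
begin

lemma Cfun_cont: "f \<in> Cfun X \<Longrightarrow> continuous_map X euclideanreal f"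
  by (simp add: Cfun_def)

lemma Cfun_out: "f \<in> Cfun X \<Longrightarrow> x \<notin> topspace X \<Longrightarrow> f x = 0"
  by (simp add: Cfun_def)

lemma Cbfun_sub: "Cbfun X \<subseteq> Cfun X"
  by (auto simp: Cbfun_def)

lemma cozero_sub: "cozero_set X W \<Longrightarrow> W \<subseteq> topspace X"
  by (auto simp: cozero_set_def)

lemma cozero_less:
  assumes "continuous_map X euclideanreal p" "continuous_map X euclideanreal q"
  shows "cozero_set X {x \<in> topspace X. p x < q x}"
proof -
  have "continuous_map X euclideanreal (\<lambda>x. max (q x - p x) 0)"
    using assms by (intro continuous_intros)
  moreover have "{x \<in> topspace X. p x < q x} = {x \<in> topspace X. max (q x - p x) 0 \<noteq> 0}"
    by auto
  ultimately show ?thesis unfolding cozero_set_def by blast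
qed

lemma cozero_Int:
  assumes "cozero_set X U" "cozero_set X V"
  shows "cozero_set X (U \<inter> V)"
proof -
  obtain f g where f: "continuous_map X euclideanreal f" "U = {x \<in> topspace X. f x \<noteq> 0}"
    and g: "continuous_map X euclideanreal g" "V = {x \<in> topspace X. g x \<noteq> 0}"
    using assms unfolding cozero_set_def by blast
  have "continuous_map X euclideanreal (\<lambda>x. f x * g x)"
    using f g by (intro continuous_intros)
  moreover have "U \<inter> V = {x \<in> topspace X. f x * g x \<noteq> 0}"
    using f g by auto
  ultimately show ?thesis unfolding cozero_set_def by blast
qed

lemma mask_Cfun:
  assumes "continuous_map X euclideanreal e"
  shows "(\<lambda>x. if x \<in> topspace X then e x else 0) \<in> Cfun X"
  unfolding Cfun_def using continuous_map_eq[OF assms, of "\<lambda>x. if x \<in> topspace X then e x else 0"]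
  by auto

lemma mask_Cbfun:
  assumes "continuous_map X euclideanreal e" "\<And>x. x \<in> topspace X \<Longrightarrow> \<bar>e x\<bar> \<le> B"
  shows "(\<lambda>x. if x \<in> topspace X then e x else 0) \<in> Cbfun X"
  unfolding Cbfun_def using mask_Cfun[OF assms(1)] assms(2) by auto

lemma bump:
  assumes "continuous_map X euclideanreal v" "x0 \<in> topspace X" "v x0 \<noteq> 0"
  defines "g \<equiv> (\<lambda>x. if x \<in> topspace X then min (\<bar>v x\<bar> / \<bar>v x0\<bar>) 1 else 0)"
  shows "g \<in> Cbfun X" "\<And>x. g x \<le> 1" "g x0 = 1" "\<And>x. g x \<noteq> 0 \<Longrightarrow> x \<in> topspace X \<and> v x \<noteq> 0"
proof -
  have c: "continuous_map X euclideanreal (\<lambda>x. min (\<bar>v x\<bar> / \<bar>v x0\<bar>) 1)"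
    using assms(1) by (intro continuous_intros) (use assms in auto)
  show "g \<in> Cbfun X" unfolding g_def
    by (rule mask_Cbfun[OF c, of 1]) auto
  show "\<And>x. g x \<le> 1" by (auto simp: g_def)
  show "g x0 = 1" using assms by (auto simp: g_def)
  show "\<And>x. g x \<noteq> 0 \<Longrightarrow> x \<in> topspace X \<and> v x \<noteq> 0" by (auto simp: g_def split: if_splits)
qed


definition dcond :: "'a topology \<Rightarrow> ('a \<Rightarrow> real) set \<Rightarrow> ('a \<Rightarrow> real) \<Rightarrow> bool" where
  "dcond X S s \<longleftrightarrow> (\<forall>W c. cozero_set X W \<and> W \<noteq> {} \<and> c > 0 \<longrightarrow> (\<exists>f\<in>S. \<exists>x\<in>W. s x - f x < c))"

definition goodL :: "'a topology \<Rightarrow> ('a \<Rightarrow> real) set \<Rightarrow> bool" where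
  "goodL X L \<longleftrightarrow> Cbfun X \<subseteq> L \<and> L \<subseteq> Cfun X \<and>
     (\<forall>s\<in>L. \<forall>w c. continuous_map X euclideanreal w \<longrightarrow> c > 0 \<longrightarrow>
        (\<lambda>x. if x \<in> topspace X then s x - min \<bar>w x\<bar> c else 0) \<in> L)"

lemma goodL_Cfun: "goodL X (Cfun X)"
  unfolding goodL_def
proof (intro conjI ballI allI impI)
  fix s w and c :: real
  assume "s \<in> Cfun X" "continuous_map X euclideanreal w" "c > 0"
  then show "(\<lambda>x. if x \<in> topspace X then s x - min \<bar>w x\<bar> c else 0) \<in> Cfun X"
    by (intro mask_Cfun continuous_intros) (auto dest: Cfun_cont)
qed (use Cbfun_sub in auto)

lemma goodL_Cbfun: "goodL X (Cbfun X)"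
  unfolding goodL_def
proof (intro conjI ballI allI impI)
  fix s w and c :: real
  assume s: "s \<in> Cbfun X" and w: "continuous_map X euclideanreal w" and c: "c > 0"
  then obtain B where B: "\<forall>x\<in>topspace X. \<bar>s x\<bar> \<le> B" "s \<in> Cfun X" by (auto simp: Cbfun_def)
  have "\<bar>s x - min \<bar>w x\<bar> c\<bar> \<le> B + c" if "x \<in> topspace X" for x
    using B(1) that c by (auto simp: abs_if min_def split: if_splits)
  then show "(\<lambda>x. if x \<in> topspace X then s x - min \<bar>w x\<bar> c else 0) \<in> Cbfun X"
    using s w by (intro mask_Cbfun[of _ _ "B + c"] continuous_intros) (auto dest: Cfun_cont simp: Cbfun_def)
qed (use Cbfun_sub in auto)

lemma sup_char:
  assumes L: "goodL X L" and S: "S \<subseteq> L" and s: "s \<in> L" and ub: "\<forall>f\<in>S. f \<le> s"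
  shows "is_sup_in L S s \<longleftrightarrow> dcond X S s"
proof
  have LC: "L \<subseteq> Cfun X" using L by (simp add: goodL_def)
  assume sup: "is_sup_in L S s"
  show "dcond X S s" unfolding dcond_def
  proof (intro allI impI, rule ccontr)
    fix W and c :: real
    assume A: "cozero_set X W \<and> W \<noteq> {} \<and> 0 < c" and N: "\<not> (\<exists>f\<in>S. \<exists>x\<in>W. s x - f x < c)"
    obtain w where w: "continuous_map X euclideanreal w" "W = {x \<in> topspace X. w x \<noteq> 0}"
      using A unfolding cozero_set_def by blast
    define u where "u = (\<lambda>x. if x \<in> topspace X then s x - min \<bar>w x\<bar> c else 0)"
    have uL: "u \<in> L" using L s w A unfolding goodL_def u_def by blast
    have "f \<le> u" if f: "f \<in> S" for f
      unfolding le_fun_def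
    proof
      fix x
      show "f x \<le> u x"
      proof (cases "x \<in> topspace X")
        case True
        show ?thesis
        proof (cases "w x = 0")
          case True
          then show ?thesis using ub f A \<open>x \<in> topspace X\<close> by (auto simp: u_def le_fun_def)
        next
          case False
          then have "x \<in> W" using w True by auto
          then have "s x - f x \<ge> c" using N f by force
          then show ?thesis using True by (auto simp: u_def)
        qed
      next
        case False
        then show ?thesis using f S LC by (auto simp: u_def Cfun_out)
      qed
    qed
    then have "s \<le> u" using sup uL unfolding is_sup_in_def by blast
    moreover obtain x where "x \<in> W" using A by auto
    ultimately show False using w A by (auto simp: u_def le_fun_def dest!: spec[of _ x])
  qed
next
  have LC: "L \<subseteq> Cfun X" using L by (simp add: goodL_def)
  assume D: "dcond X S s"
  show "is_sup_in L S s" unfolding is_sup_in_def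
  proof (intro conjI s ub ballI impI)
    fix u assume uL: "u \<in> L" and uub: "\<forall>f\<in>S. f \<le> u"
    show "s \<le> u" unfolding le_fun_def
    proof (rule allI, rule ccontr)
      fix x0 assume "\<not> s x0 \<le> u x0"
      then have x0: "u x0 < s x0" by simp
      have x0t: "x0 \<in> topspace X"
      proof (rule ccontr)
        assume "x0 \<notin> topspace X"
        moreover have "u \<in> Cfun X" "s \<in> Cfun X" using uL s LC by auto
        ultimately have "u x0 = 0" "s x0 = 0" by (auto simp: Cfun_out)
        then show False using x0 by simp
      qed
      define d where "d = s x0 - u x0"
      have d: "d > 0" using x0 by (simp add: d_def)
      define W where "W = {x \<in> topspace X. u x + d/2 < s x}"
      have "cozero_set X W" unfolding W_def
        using uL s LC by (intro cozero_less continuous_intros) (auto dest: Cfun_cont)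
      moreover have "x0 \<in> W" using x0t x0 by (auto simp: W_def d_def field_simps)
      ultimately obtain f x where f: "f \<in> S" "x \<in> W" "s x - f x < d/2"
        using D d unfolding dcond_def by (metis empty_iff half_gt_zero)
      then have "u x < f x" by (auto simp: W_def)
      moreover have "f x \<le> u x" using uub f(1) by (auto simp: le_fun_def)
      ultimately show False by simp
    qed
  qed
qed


lemma max_disjoint:
  fixes Q :: "'a set set"
  shows "\<exists>M \<subseteq> Q. pairwise disjnt M \<and> (\<forall>V\<in>Q. V \<noteq> {} \<longrightarrow> (\<exists>U\<in>M. U \<inter> V \<noteq> {}))"
proof -
  define A where "A = {M. M \<subseteq> Q \<and> pairwise disjnt M}"
  have "\<forall>C\<in>chains A. \<Union>C \<in> A"
  proof
    fix C assume C: "C \<in> chains A"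
    then have CA: "C \<subseteq> A" and ch: "chain\<^sub>\<subseteq> C" by (auto simp: chains_def)
    have "\<Union>C \<subseteq> Q" using CA by (auto simp: A_def)
    moreover have "pairwise disjnt (\<Union>C)"
      unfolding pairwise_def
    proof (intro ballI impI)
      fix U V assume "U \<in> \<Union>C" "V \<in> \<Union>C" "U \<noteq> V"
      then obtain M1 M2 where M: "M1 \<in> C" "M2 \<in> C" "U \<in> M1" "V \<in> M2" by auto
      then have "M1 \<subseteq> M2 \<or> M2 \<subseteq> M1" using ch by (auto simp: chain_subset_def)
      then show "disjnt U V"
        using M CA \<open>U \<noteq> V\<close> unfolding A_def pairwise_def by blast
    qed
    ultimately show "\<Union>C \<in> A" by (simp add: A_def)
  qed
  then obtain M where M: "M \<in> A" and mx: "\<forall>X\<in>A. M \<subseteq> X \<longrightarrow> X = M"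
    using Zorn_Lemma by blast
  have "\<exists>U\<in>M. U \<inter> V \<noteq> {}" if V: "V \<in> Q" "V \<noteq> {}" for V
  proof (rule ccontr)
    assume N: "\<not> (\<exists>U\<in>M. U \<inter> V \<noteq> {})"
    have "insert V M \<in> A"
      using M V N unfolding A_def pairwise_def disjnt_def by auto
    then have "insert V M = M" using mx by auto
    then have "V \<in> M" by auto
    then show False using N V by auto
  qed
  then show ?thesis using M by (auto simp: A_def)
qed

lemma ccc_imp_csp:
  assumes L: "goodL X L" and ccc: "ccc_cozero X"
  shows "countable_sup_property L"
  unfolding countable_sup_property_def
proof (intro allI impI)
  fix S s assume A: "S \<subseteq> L \<and> S \<noteq> {} \<and> is_sup_in L S s"
  then have S: "S \<subseteq> L" and sup: "is_sup_in L S s" by auto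
  have sL: "s \<in> L" and ub: "\<forall>f\<in>S. f \<le> s" using sup by (auto simp: is_sup_in_def)
  have D: "dcond X S s" using sup_char[OF L S sL ub] sup by simp
  have LC: "L \<subseteq> Cfun X" using L by (simp add: goodL_def)
  define Q where "Q n = {V. cozero_set X V \<and> (\<exists>h\<in>S. \<forall>x\<in>V. s x - h x < inverse (real (Suc n)))}" for n
  have "\<forall>n. \<exists>M \<subseteq> Q n. pairwise disjnt M \<and> (\<forall>V\<in>Q n. V \<noteq> {} \<longrightarrow> (\<exists>U\<in>M. U \<inter> V \<noteq> {}))"
    using max_disjoint by blast
  then obtain M where M: "\<And>n. M n \<subseteq> Q n" "\<And>n. pairwise disjnt (M n)"
    "\<And>n V. V \<in> Q n \<Longrightarrow> V \<noteq> {} \<Longrightarrow> (\<exists>U\<in>M n. U \<inter> V \<noteq> {})"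
    by metis
  have cM: "countable (M n)" for n
    using ccc M(1,2)[of n] unfolding ccc_cozero_def Q_def by blast
  define H where "H n V = (SOME h. h \<in> S \<and> (\<forall>x\<in>V. s x - h x < inverse (real (Suc n))))" for n V
  have H: "H n V \<in> S \<and> (\<forall>x\<in>V. s x - H n V x < inverse (real (Suc n)))" if "V \<in> M n" for n V
  proof -
    have "\<exists>h. h \<in> S \<and> (\<forall>x\<in>V. s x - h x < inverse (real (Suc n)))"
      using M(1)[of n] that unfolding Q_def by blast
    then show ?thesis unfolding H_def by (rule someI_ex)
  qed
  define T where "T = (\<Union>n. H n ` M n)"
  have TS: "T \<subseteq> S" using H by (auto simp: T_def)
  have cT: "countable T" unfolding T_def using cM by auto
  have DT: "dcond X T s" unfolding dcond_def
  proof (intro allI impI)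
    fix W and c :: real assume W: "cozero_set X W \<and> W \<noteq> {} \<and> 0 < c"
    obtain n where n: "inverse (real (Suc n)) < c" using reals_Archimedean W by blast
    have ip: "inverse (real (Suc n)) > 0" by simp
    obtain h x where h: "h \<in> S" "x \<in> W" "s x - h x < inverse (real (Suc n))"
      using D W ip unfolding dcond_def by blast
    define V where "V = W \<inter> {x \<in> topspace X. s x - h x < inverse (real (Suc n))}"
    have "cozero_set X {x \<in> topspace X. s x - h x < inverse (real (Suc n))}"
    proof -
      have "cozero_set X {x \<in> topspace X. s x < inverse (real (Suc n)) + h x}"
        using sL h(1) S LC by (intro cozero_less continuous_intros) (auto dest: Cfun_cont)
      moreover have "{x \<in> topspace X. s x < inverse (real (Suc n)) + h x} = {x \<in> topspace X. s x - h x < inverse (real (Suc n))}"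
        by auto
      ultimately show ?thesis by simp
    qed
    then have "cozero_set X V" unfolding V_def using W cozero_Int by blast
    moreover have "x \<in> V" using h W cozero_sub by (auto simp: V_def)
    ultimately have "V \<in> Q n" "V \<noteq> {}" using h unfolding Q_def V_def by auto
    then obtain U y where U: "U \<in> M n" "y \<in> U" "y \<in> V" using M(3) by blast
    then have "H n U \<in> T" "s y - H n U y < c" using H[OF U(1)] n by (auto simp: T_def)
    then show "\<exists>f\<in>T. \<exists>x\<in>W. s x - f x < c" using U by (auto simp: V_def)
  qed
  have "is_sup_in L T s"
    using sup_char[of X L T s] L TS S sL ub DT by auto
  then show "\<exists>T\<subseteq>S. countable T \<and> is_sup_in L T s" using TS cT by blast
qed


lemma csp_imp_ccc:
  assumes L: "goodL X L" and csp: "countable_sup_property L"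
  shows "ccc_cozero X"
  unfolding ccc_cozero_def
proof (intro allI impI)
  fix \<U> assume A: "(\<forall>U\<in>\<U>. cozero_set X U) \<and> pairwise disjnt \<U>"
  then have coz: "\<And>U. U \<in> \<U> \<Longrightarrow> cozero_set X U" and pd: "pairwise disjnt \<U>" by auto
  have BL: "Cbfun X \<subseteq> L" using L by (simp add: goodL_def)
  define one where "one = (\<lambda>x. if x \<in> topspace X then (1::real) else 0)"
  have oneL: "one \<in> L" unfolding one_def using BL
    by (intro subsetD[OF BL] mask_Cbfun[of _ _ 1]) auto
  define S where "S = {g \<in> Cbfun X. (\<forall>x. g x \<le> 1) \<and>
      ((\<exists>U\<in>\<U>. \<forall>x. g x \<noteq> 0 \<longrightarrow> x \<in> U) \<or> (\<forall>x\<in>\<Union>\<U>. g x = 0))}"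
  have SL: "S \<subseteq> L" using BL by (auto simp: S_def)
  have zS: "(\<lambda>x. 0) \<in> S" unfolding S_def Cbfun_def Cfun_def by auto
  have ub: "\<forall>f\<in>S. f \<le> one"
  proof
    fix f assume f: "f \<in> S"
    then have "f \<in> Cfun X" using Cbfun_sub by (auto simp: S_def)
    then show "f \<le> one" using f by (auto simp: le_fun_def one_def S_def Cfun_out)
  qed
  have "dcond X S one" unfolding dcond_def
  proof (intro allI impI)
    fix W and c :: real assume W: "cozero_set X W \<and> W \<noteq> {} \<and> 0 < c"
    show "\<exists>f\<in>S. \<exists>x\<in>W. one x - f x < c"
    proof (cases "W \<inter> \<Union>\<U> = {}")
      case False
      then obtain x0 U where x0: "x0 \<in> W" "U \<in> \<U>" "x0 \<in> U" by auto
      obtain v where v: "continuous_map X euclideanreal v" "U = {x \<in> topspace X. v x \<noteq> 0}"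
        using coz[OF x0(2)] unfolding cozero_set_def by blast
      have x0t: "x0 \<in> topspace X" "v x0 \<noteq> 0" using x0 v by auto
      note b = bump[OF v(1) x0t]
      let ?g = "\<lambda>x. if x \<in> topspace X then min (\<bar>v x\<bar> / \<bar>v x0\<bar>) 1 else 0"
      have g3: "\<forall>x. ?g x \<noteq> 0 \<longrightarrow> x \<in> U"
      proof (intro allI impI)
        fix x assume "?g x \<noteq> 0"
        then have "x \<in> topspace X" "v x \<noteq> 0" by (auto split: if_splits)
        then show "x \<in> U" using v(2) by simp
      qed
      have "?g \<in> S" unfolding S_def mem_Collect_eq using b(1,2) g3 x0(2) by blast
      moreover have "one x0 - ?g x0 < c" using b(3) x0t W by (simp add: one_def)
      ultimately show ?thesis using x0(1) by (intro bexI[where x="?g"]) blast+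
    next
      case True
      obtain x0 where x0: "x0 \<in> W" using W by auto
      obtain v where v: "continuous_map X euclideanreal v" "W = {x \<in> topspace X. v x \<noteq> 0}"
        using W unfolding cozero_set_def by blast
      have x0t: "x0 \<in> topspace X" "v x0 \<noteq> 0" using x0 v by auto
      note b = bump[OF v(1) x0t]
      let ?g = "\<lambda>x. if x \<in> topspace X then min (\<bar>v x\<bar> / \<bar>v x0\<bar>) 1 else 0"
      have "\<forall>x\<in>\<Union>\<U>. ?g x = 0"
      proof
        fix x assume x: "x \<in> \<Union>\<U>"
        show "?g x = 0"
        proof (rule ccontr)
          assume "?g x \<noteq> 0"
          then have "x \<in> topspace X" "v x \<noteq> 0" by (auto split: if_splits)
          then have "x \<in> W" using v(2) by simp
          then show False using True x by blast
        qed
      qed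
      then have "?g \<in> S" unfolding S_def mem_Collect_eq using b(1,2) by blast
      moreover have "one x0 - ?g x0 < c" using b(3) x0t W by (simp add: one_def)
      ultimately show ?thesis using x0(1) by (intro bexI[where x="?g"]) blast+
    qed
  qed
  then have "is_sup_in L S one" using sup_char[OF L SL oneL ub] by simp
  then obtain T where T: "T \<subseteq> S" "countable T" "is_sup_in L T one"
    using csp SL zS unfolding countable_sup_property_def by blast
  have DT: "dcond X T one" using sup_char[of X L T one] L T SL oneL ub by auto
  have ex: "\<exists>t. t \<in> T \<and> (\<exists>x\<in>U. t x \<noteq> 0)" if U: "U \<in> \<U>" "U \<noteq> {}" for U
  proof -
    obtain t x where "t \<in> T" "x \<in> U" "one x - t x < 1"
      using DT coz[OF U(1)] U(2) unfolding dcond_def by (metis zero_less_one)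
    moreover have "x \<in> topspace X" using cozero_sub[OF coz[OF U(1)]] \<open>x \<in> U\<close> by auto
    ultimately have "t \<in> T" "x \<in> U" "t x \<noteq> 0" by (auto simp: one_def)
    then show ?thesis by blast
  qed
  define F where "F U = (SOME t. t \<in> T \<and> (\<exists>x\<in>U. t x \<noteq> 0))" for U
  have F: "F U \<in> T \<and> (\<exists>x\<in>U. F U x \<noteq> 0)" if "U \<in> \<U> - {{}}" for U
  proof -
    have "\<exists>t. t \<in> T \<and> (\<exists>x\<in>U. t x \<noteq> 0)" using ex that by blast
    then show ?thesis unfolding F_def by (rule someI_ex)
  qed
  have key: "\<exists>U'\<in>\<U>. \<forall>x. t x \<noteq> 0 \<longrightarrow> x \<in> U'" if "t \<in> T" "x \<in> U" "U \<in> \<U>" "t x \<noteq> 0" for t x U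
  proof -
    have "t \<in> S" using that T(1) by blast
    then have "(\<exists>U\<in>\<U>. \<forall>x. t x \<noteq> 0 \<longrightarrow> x \<in> U) \<or> (\<forall>x\<in>\<Union>\<U>. t x = 0)"
      unfolding S_def by blast
    moreover have "\<not> (\<forall>x\<in>\<Union>\<U>. t x = 0)" using that by blast
    ultimately show ?thesis by blast
  qed
  have "inj_on F (\<U> - {{}})"
  proof (rule inj_onI)
    fix U V assume U: "U \<in> \<U> - {{}}" and V: "V \<in> \<U> - {{}}" and e: "F U = F V"
    obtain x where x: "x \<in> U" "F U x \<noteq> 0" using F[OF U] by blast
    obtain y where y: "y \<in> V" "F V y \<noteq> 0" using F[OF V] by blast
    obtain U' where U': "U' \<in> \<U>" "\<forall>z. F U z \<noteq> 0 \<longrightarrow> z \<in> U'"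
      using key[of "F U" x U] F[OF U] x U by blast
    have "x \<in> U'" "y \<in> U'" using U' x y e by auto
    have "U = U'"
    proof (rule ccontr)
      assume "U \<noteq> U'"
      then have "disjnt U U'" using pd U U'(1) unfolding pairwise_def by blast
      then show False using x(1) \<open>x \<in> U'\<close> unfolding disjnt_def by blast
    qed
    moreover have "V = U'"
    proof (rule ccontr)
      assume "V \<noteq> U'"
      then have "disjnt V U'" using pd V U'(1) unfolding pairwise_def by blast
      then show False using y(1) \<open>y \<in> U'\<close> unfolding disjnt_def by blast
    qed
    ultimately show "U = V" by simp
  qed
  moreover have "F ` (\<U> - {{}}) \<subseteq> T" using F by auto
  ultimately have "countable (\<U> - {{}})"
    using T(2) by (meson countable_image_inj_on countable_subset)
  then have "countable (insert {} (\<U> - {{}}))" by simp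
  then show "countable \<U>" by (rule countable_subset[rotated]) auto
qed

theorem proposition4p7:
  fixes X :: "'a topology"
  shows "(countable_sup_property (Cfun X) \<longleftrightarrow> countable_sup_property (Cbfun X)) \<and>
         (countable_sup_property (Cbfun X) \<longleftrightarrow> ccc_cozero X)"
  using ccc_imp_csp[OF goodL_Cfun] ccc_imp_csp[OF goodL_Cbfun]
    csp_imp_ccc[OF goodL_Cfun] csp_imp_ccc[OF goodL_Cbfun] by blast

end
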